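(* Let $s$ be the number of targeted indices, and suppose each targeted index receives at most $\ell_M$ good insertions. Then the algorithm's total RB cost for good insertions into targeted indices is $O\big(\ell_M^2\sqrt{s\,\mathcal{B}}\big)$, where $\mathcal{B}$ is the adversary's total RB cost.
   Context: Model. A hash table has $t$ indices with chaining. The objects at an index form a list, new objects are appended at the tail, and $L_i$ denotes the current number of objects in the list at index $i$. Under the algorithm \textsc{Depth Charge}, inserting an object at index $i$ costs the inserter an RB (resource-burning) cost of $L_i+1$. Objects inserted by clients are good objects and are placed at uniformly random indices. Objects inserted by the adversary are bad objects and are placed at indices of its choosing. The algorithm's RB cost is the total cost paid by clients, and $\mathcal{B}$ is the total cost paid by the adversary. $\ell_M$ is the maximum, over indices, of the maximum number of good objects ever present in that index. A targeted index is an index containing at least one bad object and at least one good object. *)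

theory Defs
  imports Complex_Main
begin

text \<open>Model of a chained hash table under Depth Charge.  Only the number of good and
bad objects in each list matters for costs, so a state records, for every index and
every kind of object, how many such objects are currently in the list.\<close>

datatype kind = Good | Bad

datatype op = Ins kind nat | Del kind nat

type_synonym state = "nat \<Rightarrow> kind \<Rightarrow> nat"

definition init :: state where "init = (\<lambda>_ _. 0)"

fun step :: "state \<Rightarrow> op \<Rightarrow> state" where
  "step s (Ins k i) = s(i := (s i)(k := s i k + 1))"
| "step s (Del k i) = s(i := (s i)(k := s i k - 1))"

definition st :: "op list \<Rightarrow> nat \<Rightarrow> state" where
  "st ops n = foldl step init (take n ops)"

definition L :: "state \<Rightarrow> nat \<Rightarrow> nat" where
  "L s i = s i Good + s i Bad"

definition valid :: "nat \<Rightarrow> op list \<Rightarrow> bool" where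
  "valid t ops \<longleftrightarrow> (\<forall>n<length ops. case ops ! n of
      Ins k i \<Rightarrow> i < t
    | Del k i \<Rightarrow> i < t \<and> st ops n i k > 0)"

definition adv_cost :: "op list \<Rightarrow> nat" where
  "adv_cost ops = (\<Sum>n<length ops. case ops ! n of
      Ins Bad i \<Rightarrow> L (st ops n) i + 1 | _ \<Rightarrow> 0)"

definition targeted :: "nat \<Rightarrow> op list \<Rightarrow> nat \<Rightarrow> bool" where
  "targeted t ops i \<longleftrightarrow> i < t \<and>
     (\<exists>n\<le>length ops. st ops n i Good \<ge> 1 \<and> st ops n i Bad \<ge> 1)"

definition num_targeted :: "nat \<Rightarrow> op list \<Rightarrow> nat" where
  "num_targeted t ops = card {i. targeted t ops i}"

definition ellM :: "nat \<Rightarrow> op list \<Rightarrow> nat" where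
  "ellM t ops = Max (insert 0 {st ops n i Good | n i. n \<le> length ops \<and> i < t})"

definition good_ins :: "op list \<Rightarrow> nat \<Rightarrow> nat" where
  "good_ins ops i = card {n. n < length ops \<and> ops ! n = Ins Good i}"

definition good_cost_targeted :: "nat \<Rightarrow> op list \<Rightarrow> nat" where
  "good_cost_targeted t ops = (\<Sum>n<length ops. case ops ! n of
      Ins Good i \<Rightarrow> (if targeted t ops i then L (st ops n) i + 1 else 0) | _ \<Rightarrow> 0)"

end

theory Submission
  imports Defs
begin

lemma st_0: "st ops 0 = init" by (simp add: st_def)

lemma st_Suc: "n < length ops \<Longrightarrow> st ops (Suc n) = step (st ops n) (ops ! n)"
  by (simp add: st_def take_Suc_conv_app_nth)

definition F :: "op list \<Rightarrow> nat \<Rightarrow> nat \<Rightarrow> nat" where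
  "F ops i m = (\<Sum>n<m. if ops ! n = Ins Bad i then st ops n i Bad + 1 else 0)"

lemma F_bound: "m \<le> length ops \<Longrightarrow> st ops m i Bad * (st ops m i Bad + 1) \<le> 2 * F ops i m"
proof (induction m)
  case 0
  then show ?case by (simp add: st_0 init_def F_def)
next
  case (Suc m)
  have m: "m < length ops" using Suc.prems by simp
  have IH: "st ops m i Bad * (st ops m i Bad + 1) \<le> 2 * F ops i m" using Suc m by simp
  have FS: "F ops i (Suc m) = F ops i m + (if ops ! m = Ins Bad i then st ops m i Bad + 1 else 0)"
    by (simp add: F_def)
  show ?case
  proof (cases "ops ! m")
    case (Ins k j)
    show ?thesis
    proof (cases "k = Bad \<and> j = i")
      case True
      then have "st ops (Suc m) i Bad = st ops m i Bad + 1" using st_Suc[OF m] Ins by simp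
      then show ?thesis using IH FS True Ins by (simp add: algebra_simps)
    next
      case False
      then have "st ops (Suc m) i Bad = st ops m i Bad" using st_Suc[OF m] Ins by auto
      then show ?thesis using IH FS False Ins by auto
    qed
  next
    case (Del k j)
    have le: "st ops (Suc m) i Bad \<le> st ops m i Bad" using st_Suc[OF m] Del by auto
    have "st ops (Suc m) i Bad * (st ops (Suc m) i Bad + 1) \<le> st ops m i Bad * (st ops m i Bad + 1)"
      using le by (intro mult_mono) auto
    then show ?thesis using IH FS Del by auto
  qed
qed

lemma F_mono: "m \<le> m' \<Longrightarrow> F ops i m \<le> F ops i m'"
  unfolding F_def by (rule sum_mono2) auto

lemma amgm: assumes "a \<ge> 0" "mu > 0" shows "sqrt a \<le> (a / mu + mu) / 2"
proof -
  have "0 \<le> (sqrt a - mu)^2" by simp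
  then have "2 * mu * sqrt a \<le> a + mu^2" using assms by (simp add: power2_eq_square algebra_simps)
  then show ?thesis using assms by (simp add: field_simps power2_eq_square)
qed

theorem lemma3:
  "\<exists>C>0. \<forall>t ops. valid t ops \<longrightarrow>
     (\<forall>i. targeted t ops i \<longrightarrow> good_ins ops i \<le> ellM t ops) \<longrightarrow>
     real (good_cost_targeted t ops)
       \<le> C * real (ellM t ops) ^ 2 * sqrt (real (num_targeted t ops) * real (adv_cost ops))"
proof (intro exI[of _ 4] conjI allI impI)
  fix t ops
  assume gi: "\<forall>i. targeted t ops i \<longrightarrow> good_ins ops i \<le> ellM t ops"
  define T where "T = {i. targeted t ops i}"
  define len where "len = length ops"
  define lm where "lm = ellM t ops"
  define A where "A i = F ops i len" for i
  define G where "G i = (\<Sum>n<len. if ops ! n = Ins Good i then L (st ops n) i + 1 else 0)" for i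
  have finT: "finite T" unfolding T_def targeted_def by (rule finite_subset[of _ "{..<t}"]) auto
  have s_def0: "num_targeted t ops = card T" by (simp add: num_targeted_def T_def)
  have cost: "good_cost_targeted t ops = (\<Sum>i\<in>T. G i)"
  proof -
    have "good_cost_targeted t ops = (\<Sum>n<len. \<Sum>i\<in>T. if ops ! n = Ins Good i then L (st ops n) i + 1 else 0)"
      unfolding good_cost_targeted_def len_def
    proof (rule sum.cong[OF refl])
      fix n
      show "(case ops ! n of Ins Good i \<Rightarrow> if targeted t ops i then L (st ops n) i + 1 else 0 | _ \<Rightarrow> 0)
         = (\<Sum>i\<in>T. if ops ! n = Ins Good i then L (st ops n) i + 1 else 0)"
      proof (cases "ops ! n")
        case (Ins k j) then show ?thesis
          by (cases k) (auto simp: sum.delta'[OF finT[unfolded T_def]] T_def)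
      next
        case (Del k j) then show ?thesis by simp
      qed
    qed
    also have "\<dots> = (\<Sum>i\<in>T. G i)" unfolding G_def by (rule sum.swap)
    finally show ?thesis .
  qed
  have adv: "(\<Sum>i\<in>T. A i) \<le> adv_cost ops"
  proof -
    have "(\<Sum>i\<in>T. A i) = (\<Sum>n<len. \<Sum>i\<in>T. if ops ! n = Ins Bad i then st ops n i Bad + 1 else 0)"
      unfolding A_def F_def by (rule sum.swap)
    also have "\<dots> \<le> adv_cost ops"
      unfolding adv_cost_def len_def
    proof (rule sum_mono)
      fix n
      show "(\<Sum>i\<in>T. if ops ! n = Ins Bad i then st ops n i Bad + 1 else 0)
         \<le> (case ops ! n of Ins Bad i \<Rightarrow> L (st ops n) i + 1 | _ \<Rightarrow> 0)"
      proof (cases "ops ! n")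
        case (Ins k j) then show ?thesis
          by (cases k) (auto simp: sum.delta'[OF finT] L_def)
      next
        case (Del k j) then show ?thesis by simp
      qed
    qed
    finally show ?thesis .
  qed
  have A1: "A i \<ge> 1" if "i \<in> T" for i
  proof -
    from that obtain n where n: "n \<le> len" "st ops n i Bad \<ge> 1"
      unfolding T_def targeted_def len_def by auto
    have "2 \<le> st ops n i Bad * (st ops n i Bad + 1)" using n(2)
      using mult_le_mono[of 1 "st ops n i Bad" 2 "st ops n i Bad + 1"] by simp
    also have "\<dots> \<le> 2 * F ops i n" using F_bound n(1) len_def by simp
    also have "\<dots> \<le> 2 * A i" unfolding A_def using F_mono n(1) by simp
    finally show ?thesis by simp
  qed
  have Gb: "real (G i) \<le> real lm * (real lm + 1 + sqrt 2 * sqrt (real (A i)))" if iT: "i \<in> T" for i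
  proof -
    let ?K = "real lm + 1 + sqrt 2 * sqrt (real (A i))"
    let ?P = "\<lambda>n. ops ! n = Ins Good i"
    have it: "i < t" using iT unfolding T_def targeted_def by auto
    have fin: "finite (insert 0 {st ops n i Good |n i. n \<le> length ops \<and> i < t})"
    proof -
      have "{st ops n i Good |n i. n \<le> length ops \<and> i < t} = (\<lambda>(n,i). st ops n i Good) ` ({..length ops} \<times> {..<t})"
        by auto
      then show ?thesis by simp
    qed
    have trm: "real (L (st ops n) i + 1) \<le> ?K" if n: "n < len" for n
    proof -
      have g: "st ops n i Good \<le> lm" unfolding lm_def ellM_def
        using n it len_def by (intro Max_ge[OF fin] insertI2) (rule CollectI, rule exI[of _ n], rule exI[of _ i], simp)
      have "st ops n i Bad * (st ops n i Bad + 1) \<le> 2 * A i"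
        using F_bound[of n ops i] F_mono[of n len ops i] n len_def A_def by simp
      then have "real (st ops n i Bad) ^ 2 \<le> 2 * real (A i)"
      proof -
        have "st ops n i Bad * st ops n i Bad \<le> st ops n i Bad * (st ops n i Bad + 1)" by simp
        with \<open>st ops n i Bad * (st ops n i Bad + 1) \<le> 2 * A i\<close>
        have "st ops n i Bad * st ops n i Bad \<le> 2 * A i" by linarith
        then have "real (st ops n i Bad * st ops n i Bad) \<le> real (2 * A i)" by (rule of_nat_mono)
        then show ?thesis by (simp add: power2_eq_square)
      qed
      then have "real (st ops n i Bad) \<le> sqrt (2 * real (A i))" by (simp add: real_le_rsqrt)
      then have "real (st ops n i Bad) \<le> sqrt 2 * sqrt (real (A i))" by (simp add: real_sqrt_mult)
      moreover have "real (st ops n i Good) \<le> real lm" using g by (rule of_nat_mono)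
      moreover have "L (st ops n) i = st ops n i Good + st ops n i Bad" by (rule L_def)
      ultimately show ?thesis by simp
    qed
    have "real (G i) = (\<Sum>n<len. if ?P n then real (L (st ops n) i + 1) else 0)"
      unfolding G_def by (simp add: of_nat_sum if_distrib cong: if_cong)
    also have "\<dots> \<le> (\<Sum>n<len. if ?P n then ?K else 0)"
      by (rule sum_mono) (use trm in force)
    also have "\<dots> = real (good_ins ops i) * ?K"
    proof -
      have "(\<Sum>n<len. if ?P n then ?K else 0) = (\<Sum>n\<in>{n\<in>{..<len}. ?P n}. ?K)"
        by (simp add: sum.inter_filter[symmetric])
      also have "{n\<in>{..<len}. ?P n} = {n. n < length ops \<and> ?P n}" by (auto simp: len_def)
      finally show ?thesis by (simp add: good_ins_def)
    qed
    also have "\<dots> \<le> real lm * ?K"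
      using gi iT unfolding T_def lm_def by (intro mult_right_mono) auto
    finally show ?thesis .
  qed
  define s where "s = card T"
  define B where "B = adv_cost ops"
  have goal_rhs: "num_targeted t ops = s" by (simp add: s_def0 s_def)
  show "real (good_cost_targeted t ops)
       \<le> 4 * real (ellM t ops) ^ 2 * sqrt (real (num_targeted t ops) * real (adv_cost ops))"
  proof (cases "T = {}")
    case True
    then show ?thesis using cost by simp
  next
    case False
    have s0: "s > 0" using False finT s_def by (simp add: card_gt_0_iff)
    have sB: "s \<le> B"
    proof -
      have "s = (\<Sum>i\<in>T. 1::nat)" by (simp add: s_def)
      also have "\<dots> \<le> (\<Sum>i\<in>T. A i)" by (rule sum_mono) (use A1 in force)
      finally show ?thesis using adv B_def by simp
    qed
    have B0: "real B > 0" using s0 sB by simp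
    define rs where "rs = sqrt (real s)"
    define rb where "rb = sqrt (real B)"
    have rs0: "rs > 0" using s0 by (simp add: rs_def)
    have rb0: "rb > 0" using B0 by (simp add: rb_def)
    have rss: "real s = rs * rs" using s0 by (simp add: rs_def)
    have rbb: "real B = rb * rb" using B0 by (simp add: rb_def)
    have sqsB: "sqrt (real s * real B) = rs * rb" by (simp add: rs_def rb_def real_sqrt_mult)
    define mu where "mu = rb / rs"
    have mu0: "mu > 0" using rs0 rb0 by (simp add: mu_def)
    have sq: "(\<Sum>i\<in>T. sqrt (real (A i))) \<le> sqrt (real s * real B)"
    proof -
      have "(\<Sum>i\<in>T. sqrt (real (A i))) \<le> (\<Sum>i\<in>T. (real (A i) / mu + mu) / 2)"
        by (rule sum_mono) (rule amgm[OF _ mu0], simp)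
      also have "\<dots> = ((\<Sum>i\<in>T. real (A i)) / mu + real s * mu) / 2"
      proof -
        have "(\<Sum>i\<in>T. (real (A i) / mu + mu) / 2) = (\<Sum>i\<in>T. real (A i) / mu + mu) / 2"
          by (rule sum_divide_distrib[symmetric])
        also have "(\<Sum>i\<in>T. real (A i) / mu + mu) = (\<Sum>i\<in>T. real (A i) / mu) + (\<Sum>i\<in>T. mu)"
          by (rule sum.distrib)
        also have "(\<Sum>i\<in>T. real (A i) / mu) = (\<Sum>i\<in>T. real (A i)) / mu"
          by (rule sum_divide_distrib[symmetric])
        also have "(\<Sum>i\<in>T. mu) = real s * mu" by (simp add: s_def)
        finally show ?thesis .
      qed
      also have "\<dots> \<le> (real B / mu + real s * mu) / 2"
      proof -
        have "(\<Sum>i\<in>T. real (A i)) = real (\<Sum>i\<in>T. A i)" by (rule of_nat_sum[symmetric])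
        also have "\<dots> \<le> real B" using adv B_def by (simp only: of_nat_le_iff)
        finally have "(\<Sum>i\<in>T. real (A i)) \<le> real B" .
        then show ?thesis using mu0 by (simp add: divide_right_mono)
      qed
      also have "\<dots> = sqrt (real s * real B)"
      proof -
        have "real B / mu = rs * rb" unfolding rbb mu_def using rs0 rb0 by (simp add: field_simps)
        moreover have "real s * mu = rs * rb" unfolding rss mu_def using rs0 rb0 by (simp add: field_simps)
        ultimately show ?thesis using sqsB by simp
      qed
      finally show ?thesis .
    qed
    have ssq: "real s \<le> sqrt (real s * real B)"
      using sB s0 by (intro real_le_rsqrt) (simp add: power2_eq_square mult_left_mono)
    have l2: "real lm \<le> real lm ^ 2" by (cases lm) (auto simp: power2_eq_square)
    have "real (good_cost_targeted t ops) = (\<Sum>i\<in>T. real (G i))" by (simp add: cost)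
    also have "\<dots> \<le> (\<Sum>i\<in>T. real lm * (real lm + 1 + sqrt 2 * sqrt (real (A i))))"
      by (rule sum_mono) (rule Gb)
    also have "\<dots> = real s * (real lm * (real lm + 1)) + real lm * sqrt 2 * (\<Sum>i\<in>T. sqrt (real (A i)))"
      by (simp add: distrib_left sum.distrib sum_distrib_left s_def algebra_simps)
    also have "\<dots> \<le> sqrt (real s * real B) * (2 * real lm ^ 2) + real lm ^ 2 * sqrt 2 * sqrt (real s * real B)"
    proof (rule add_mono)
      have "real lm * (real lm + 1) \<le> 2 * real lm ^ 2" using l2 by (simp add: power2_eq_square algebra_simps)
      then show "real s * (real lm * (real lm + 1)) \<le> sqrt (real s * real B) * (2 * real lm ^ 2)"
        using mult_mono[OF ssq \<open>real lm * (real lm + 1) \<le> 2 * real lm ^ 2\<close>] by simp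
      show "real lm * sqrt 2 * (\<Sum>i\<in>T. sqrt (real (A i))) \<le> real lm ^ 2 * sqrt 2 * sqrt (real s * real B)"
      proof -
        have "real lm * sqrt 2 \<le> real lm ^ 2 * sqrt 2" using l2 by (rule mult_right_mono) simp
        then show ?thesis using sq by (intro mult_mono) (auto intro: sum_nonneg)
      qed
    qed
    also have "\<dots> \<le> 4 * real lm ^ 2 * sqrt (real s * real B)"
    proof -
      have "sqrt 2 \<le> 2" by (rule real_le_lsqrt) (simp_all add: power2_eq_square)
      then have "real lm ^ 2 * sqrt 2 * sqrt (real s * real B) \<le> real lm ^ 2 * 2 * sqrt (real s * real B)"
        by (intro mult_right_mono mult_left_mono) auto
      then show ?thesis by (simp add: algebra_simps)
    qed
    finally show ?thesis by (simp add: lm_def s_def0 B_def s_def)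
  qed
qed simp

end
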